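(* For all $i,j\in[K]$ and $0<\epsilon<2$, $$\eta_{i,j}(\epsilon)\le \log\Big(\frac{2}{\epsilon}\Big)+1+\log\big(1+D_{f_1}(\mathrm{P}_i\Vert \mathrm{P}_j)\big).$$ Furthermore, if $\epsilon\le 1$, then $$\eta_{i,j}(\epsilon)\le 2\log\Big(\frac{2}{\epsilon}\Big)\Big[1+\log\big(1+D_{f_1}(\mathrm{P}_i\Vert \mathrm{P}_j)\big)\Big].$$
   Context: Setting: $\mathcal{G}$ is a causal directed acyclic graph viewed as a Bayesian network (the joint law factorizes as the product over nodes $X$ of $\mathrm{P}(X\mid pa(X))$). $V$ is a node with parent set $pa(V)$; $V$ and $pa(V)$ take values in finite sets. There are $K$ arms indexed by $[K]=\{0,\dots,K-1\}$: under arm $k$ the conditional law of $V$ given $pa(V)$ is a known conditional distribution $\mathrm{P}_k(V\mid pa(V))$ while all other conditionals (hence the marginal law of $pa(V)$) are unchanged; these conditionals are mutually absolutely continuous. $\mathbb{P}_k,\mathbb{E}_k$ denote probability/expectation under the joint law induced by arm $k$. Logarithms are natural. Conditional $f$-divergence: for a convex $f\ge 0$ with $f(1)=0$, $D_f(\mathrm{P}_i\Vert\mathrm{P}_j)=\mathbb{E}_j\big[f\big(\mathrm{P}_i(V\mid pa(V))/\mathrm{P}_j(V\mid pa(V))\big)\big]$. Here $f_1(x)=x\exp(x-1)-1$. For $0<\epsilon<2$: $\eta_{i,j}(\epsilon)=\min\{\eta\in\mathbb{R}:\ \mathbb{P}_i(\mathrm{P}_i(V\mid pa(V))/\mathrm{P}_j(V\mid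 pa(V))>\eta)\le \epsilon/2\}$. *)

theory Defs
  imports "HOL-Probability.Probability"
begin

text \<open>The only part of the Bayesian network that matters is the pair (pa(V), V).
  q is the (arm-independent) marginal law of pa(V); P k u is the conditional law of V
  given pa(V) = u under arm k.\<close>

definition joint :: "'u pmf \<Rightarrow> ('u \<Rightarrow> 'v pmf) \<Rightarrow> ('u \<times> 'v) pmf" where
  "joint q Pk = bind_pmf q (\<lambda>u. map_pmf (\<lambda>v. (u, v)) (Pk u))"

definition cond_fdiv :: "(real \<Rightarrow> real) \<Rightarrow> 'u pmf \<Rightarrow> (nat \<Rightarrow> 'u \<Rightarrow> 'v pmf) \<Rightarrow> nat \<Rightarrow> nat \<Rightarrow> real" where
  "cond_fdiv f q P i j = measure_pmf.expectation (joint q (P j))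
      (\<lambda>(u, v). f (pmf (P i u) v / pmf (P j u) v))"

definition f1 :: "real \<Rightarrow> real" where
  "f1 x = x * exp (x - 1) - 1"

definition eta :: "'u pmf \<Rightarrow> (nat \<Rightarrow> 'u \<Rightarrow> 'v pmf) \<Rightarrow> nat \<Rightarrow> nat \<Rightarrow> real \<Rightarrow> real" where
  "eta q P i j \<epsilon> = (LEAST \<eta>::real. measure_pmf.prob (joint q (P i))
      {(u, v). pmf (P i u) v / pmf (P j u) v > \<eta>} \<le> \<epsilon> / 2)"

end

theory Submission
  imports Defs "HOL-Analysis.Harmonic_Numbers"
begin

lemma ln2_gt: "(693/1000::real) < ln 2"
proof -
  from ln_approx_bounds[of 2 3] have "842 \<le> ln (2::real) * 1215"
    by (simp add: eval_nat_numeral)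
  then show ?thesis by simp
qed

lemma H0_ge:
  fixes l :: real assumes l: "0 \<le> l"
  shows "1 \<le> (2 / exp 1) * (1 + (2 * ln 2 - 1) * l) + exp (- l) / (4 * ln 2 * (1 + l))"
proof -
  define a0 where "a0 = ln (2::real)"
  define E where "E = 2 / exp (1::real)"
  have a0l: "693/1000 < a0" using ln2_gt a0_def by simp
  have a0u: "a0 \<le> 25/36" using ln2_le_25_over_36 a0_def by simp
  have El: "E > 2/(272/100)" unfolding E_def using e_less_272
    by (intro divide_strict_left_mono) auto
  have e2: "2 < exp (1::real)" using exp_lower_Taylor_quadratic[of "1::real"] by simp
  have Eu: "E < 1" unfolding E_def using e2 by simp
  have c0: "0 \<le> 2*a0 - 1" using a0l by simp
  have w0: "0 \<le> exp (- l) / (4 * a0 * (1 + l))" using a0l l by simp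
  have MG: "1 \<le> E * (1 + (2*a0 - 1)*l) + exp (- l) / (4*a0*(1+l))"
  proof (cases "l \<ge> 1")
    case True
    have "(2/(272/100)) * (2*(693/1000)) \<le> E*(2*a0)"
      by (rule mult_mono) (use El a0l in auto)
    then have "E * (2*a0) \<ge> 1" by simp
    moreover have "E * (1 + (2*a0-1)*l) \<ge> E * (1 + (2*a0 - 1))"
    proof -
      have "(2*a0-1)*1 \<le> (2*a0-1)*l" by (rule mult_left_mono) (use True c0 in auto)
      then show ?thesis using El by (intro mult_left_mono) auto
    qed
    ultimately show ?thesis using w0 by simp
  next
    case False
    have e1: "exp (- l) \<ge> (1 - l/2)^2"
    proof -
      have "1 - l/2 \<le> exp (- l/2)" using exp_ge_add_one_self[of "-l/2"] by simp
      moreover have "0 \<le> 1 - l/2" using False by simp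
      ultimately have "(1 - l/2)^2 \<le> (exp (-l/2))^2" by (intro power_mono) auto
      also have "\<dots> = exp (- l)" by (simp add: power2_eq_square exp_add[symmetric])
      finally show ?thesis .
    qed
    have pos: "0 < 4 * a0 * (1 + l)" using a0l l by simp
    have q1: "4*a0*(E-1) \<ge> 4*(25/36)*(2/(272/100) - 1)"
    proof -
      have "a0*(E-1) \<ge> (25/36)*(E-1)" using a0u Eu by (intro mult_right_mono_neg) auto
      moreover have "(25/36)*(E-1) \<ge> (25/36)*(2/(272/100) - 1)" using El by simp
      ultimately show ?thesis by simp
    qed
    have q2: "4*a0*(2*a0*E - 1)*l \<ge> 0"
    proof -
      have "(2*(693/1000)) * (2/(272/100)) \<le> (2*a0)*E"
        by (rule mult_mono) (use El a0l in auto)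
      then have "2*a0*E \<ge> 1" by simp
      then show ?thesis using a0l l by simp
    qed
    have q3: "4*a0*E*(2*a0-1) \<ge> 4*(693/1000)*(2/(272/100))*(2*(693/1000)-1)"
      using a0l El by (intro mult_mono) auto
    have ll: "l^2 \<ge> 0" by simp
    have q3': "4*a0*E*(2*a0-1)*l^2 \<ge> 4*(693/1000)*(2/(272/100))*(2*(693/1000)-1) * l^2"
      using q3 ll by (rule mult_right_mono)
    have quad: "4*(25/36)*(2/(272/100) - 1) + 1 - l + (4*(693/1000)*(2/(272/100))*(2*(693/1000)-1) + 1/4) * l^2 \<ge> 0"
    proof -
      have sq: "0 \<le> (4*(693/1000)*(2/(272/100))*(2*(693/1000)-1) + 1/4) * (l - 12/25)^2"
        by simp
      have "(4*(693/1000)*(2/(272/100))*(2*(693/1000)-1) + 1/4) * (l - 12/25)^2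
          = (4*(693/1000)*(2/(272/100))*(2*(693/1000)-1) + 1/4) * l^2
            - 2 * (12/25) * (4*(693/1000)*(2/(272/100))*(2*(693/1000)-1) + 1/4) * l
            + (144/625) * (4*(693/1000)*(2/(272/100))*(2*(693/1000)-1) + 1/4)"
        by (simp add: power2_eq_square algebra_simps)
      then show ?thesis using sq l False by simp
    qed
    have main: "E * (1 + (2*a0-1)*l) * (4*a0*(1+l)) + (1 - l/2)^2 \<ge> 4*a0*(1+l)"
    proof -
      have "E * (1 + (2*a0-1)*l) * (4*a0*(1+l)) - 4*a0*(1+l) + (1 - l/2)^2
           = 4*a0*(E-1) + 4*a0*(2*a0*E - 1)*l + 4*a0*E*(2*a0-1)*l^2 + 1 - l + l^2/4"
        by (simp add: algebra_simps power2_eq_square)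
      then show ?thesis using q1 q2 q3' quad by (simp add: algebra_simps)
    qed
    have "exp (- l) / (4 * a0 * (1 + l)) \<ge> (1 - l/2)^2 / (4 * a0 * (1 + l))"
      using e1 pos by (simp add: divide_right_mono)
    moreover have "E * (1 + (2*a0-1)*l) + (1 - l/2)^2 / (4 * a0 * (1 + l)) \<ge> 1"
      using main pos by (simp add: field_simps)
    ultimately show ?thesis by simp
  qed
  then show ?thesis by (simp add: a0_def E_def)
qed
lemma H_ge:
  fixes a l :: real assumes a: "ln 2 \<le> a" and l: "0 \<le> l"
  shows "1 \<le> exp (a - 1) * (1 + (2*a - 1) * l) + exp (- l) / (4 * a * (1 + l))"
proof -
  define a0 where "a0 = ln (2::real)"
  define E where "E = 2 / exp (1::real)"
  define d where "d = a - a0"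
  define w where "w = exp (- l) / (1 + l)"
  have a0l: "693/1000 < a0" using ln2_gt a0_def by simp
  have d0: "0 \<le> d" using a a0_def d_def by simp
  have El: "E > 2/(272/100)" unfolding E_def using e_less_272
    by (intro divide_strict_left_mono) auto
  have w0: "0 \<le> w" unfolding w_def using l by simp
  have w1: "w \<le> 1"
  proof -
    have "exp (- l) \<le> 1" using l by simp
    also have "1 \<le> 1 + l" using l by simp
    finally show ?thesis unfolding w_def using l by simp
  qed
  have H0: "1 \<le> E * (1 + (2 * a0 - 1) * l) + w / (4 * a0)"
    using H0_ge[OF l] unfolding E_def a0_def w_def by (simp add: field_simps)
  have ea: "exp (a - 1) = E * exp d"
    unfolding E_def d_def a0_def by (simp add: exp_diff exp_add[symmetric] exp_minus field_simps)
  have ed: "exp d \<ge> 1 + d" by (rule exp_ge_add_one_self)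
  have E0: "0 < E" using El by simp
  have c1: "1 + (2*a - 1) * l \<ge> 1 + (2*a0 - 1) * l"
    using l d0 unfolding d_def by (intro add_left_mono mult_right_mono) auto
  have c2: "1 + (2*a0 - 1) * l \<ge> 1" using l a0l by simp
  have T1: "exp (a - 1) * (1 + (2*a - 1) * l) \<ge> E * (1 + (2*a0 - 1) * l) + E * d"
  proof -
    have "exp (a - 1) * (1 + (2*a - 1) * l) \<ge> (E * (1 + d)) * (1 + (2*a0 - 1) * l)"
      unfolding ea using c1 c2 ed E0 d0 by (intro mult_mono) auto
    moreover have "(E * (1 + d)) * (1 + (2*a0 - 1) * l) \<ge> E * (1 + (2*a0 - 1) * l) + E * d"
    proof -
      have "E * d * (1 + (2*a0 - 1) * l) \<ge> E * d * 1"
        using c2 E0 d0 by (intro mult_left_mono) auto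
      then show ?thesis by (simp add: algebra_simps)
    qed
    ultimately show ?thesis by linarith
  qed
  have T2: "exp (- l) / (4 * a * (1 + l)) \<ge> w / (4 * a0) - d / (4 * a0^2)"
  proof -
    have ad: "a = a0 + d" using d_def by simp
    have "exp (- l) / (4 * a * (1 + l)) = w / (4 * a)" unfolding w_def by simp
    moreover have "1 / a \<ge> (a0 - d) / a0^2"
    proof -
      have "(a0 - d) * a \<le> a0^2" unfolding ad by (simp add: power2_eq_square algebra_simps)
      then show ?thesis using a0l d0 ad by (simp add: field_simps)
    qed
    then have "w * (1 / a) \<ge> w * ((a0 - d) / a0^2)" using w0 by (intro mult_left_mono) auto
    moreover have "w * d / a0^2 \<le> d / a0^2" using mult_right_mono[OF w1 d0] a0l
      by (intro divide_right_mono) auto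
    ultimately show ?thesis using a0l by (simp add: field_simps power2_eq_square)
  qed
  have Ed: "E * d \<ge> d / (4 * a0^2)"
  proof -
    have "4 * a0^2 \<ge> 4 * (693/1000)^2" using a0l by (intro mult_left_mono power_mono) auto
    then have "1 / (4 * a0^2) \<le> 1 / (4 * (693/1000)^2)" using a0l by (intro divide_left_mono) auto
    also have "\<dots> \<le> 2/(272/100)" by (simp add: power2_eq_square)
    finally have "1 / (4 * a0^2) \<le> E" using El by simp
    then show ?thesis using d0 by (metis mult.commute divide_right_mono times_divide_eq_right
        mult.right_neutral mult_left_mono)
  qed
  show ?thesis using H0 T1 T2 Ed by linarith
qed

lemma key_ineq:
  fixes a l :: real assumes a: "ln 2 \<le> a" and l: "0 \<le> l"
  shows "exp l - 1 \<le> exp (- a) * (exp (2*a*(1+l) - 1) + 1/(2*a*(1+l)) - 2)"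
proof -
  have a0: "a > 1/2" using a ln2_gt by simp
  define h where "h = 2*a*(1+l)"
  have "2*a*1 \<le> 2*a*(1+l)" using a0 l by (intro mult_left_mono) auto
  then have h1: "h \<ge> 1" unfolding h_def using a0 by linarith
  have ea: "exp (- a) \<le> 1/2"
  proof -
    have "exp (- a) \<le> exp (- ln 2)" using a by simp
    also have "\<dots> = 1/2" by (simp add: exp_minus)
    finally show ?thesis .
  qed
  have p1: "exp (- a) * (1/h - 2) \<ge> 1/2 * (1/h - 2)"
    using ea h1 by (intro mult_right_mono_neg) (auto simp: field_simps)
  have p2: "exp (- a) * exp (h - 1) = exp l * exp (a - 1 + (2*a - 1) * l)"
    unfolding h_def by (simp add: exp_add[symmetric] algebra_simps)
  have p3: "exp (a - 1 + (2*a - 1) * l) \<ge> exp (a - 1) * (1 + (2*a - 1) * l)"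
    by (simp add: exp_add exp_ge_add_one_self)
  have p4a: "exp l * (exp (- l) / (4 * a * (1 + l))) = 1 / (4 * a * (1 + l))"
    by (simp add: exp_minus)
  have p4: "1/2 * (1/h) = exp l * (exp (- l) / (4 * a * (1 + l)))"
    unfolding p4a h_def by simp
  have "exp l * 1 \<le> exp l * (exp (a - 1) * (1 + (2*a - 1) * l) + exp (- l) / (4 * a * (1 + l)))"
    using H_ge[OF a l] by (intro mult_left_mono) auto
  moreover have "exp l * exp (a - 1 + (2*a - 1) * l) \<ge> exp l * (exp (a - 1) * (1 + (2*a - 1) * l))"
    using p3 by (intro mult_left_mono) auto
  ultimately have "exp l \<le> exp (- a) * exp (h - 1) + 1/2 * (1/h)"
    using p2 p4 by (simp add: algebra_simps)
  then show ?thesis using p1 unfolding h_def[symmetric] by (simp add: algebra_simps)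
qed


lemma least_le:
  fixes R :: "'a::finite \<Rightarrow> real" and M :: "'a pmf" and c B :: real
  assumes B: "measure_pmf.prob M {x. B < R x} \<le> c" and c1: "c < 1"
  shows "(LEAST \<eta>::real. measure_pmf.prob M {x. \<eta> < R x} \<le> c) \<le> B"
proof -
  define G where "G = (\<lambda>\<eta>. measure_pmf.prob M {x. \<eta> < R x})"
  define S where "S = R ` set_pmf M"
  have finS: "finite S" unfolding S_def by simp
  have neS: "S \<noteq> {}" unfolding S_def using set_pmf_not_empty by auto
  have Gset: "G \<eta> = measure_pmf.prob M ({x. \<eta> < R x} \<inter> set_pmf M)" for \<eta>
    unfolding G_def by (simp add: measure_Int_set_pmf)
  have one: "measure_pmf.prob M (set_pmf M) = 1"
    using sum_pmf_eq_1[of "set_pmf M" M] by (simp add: measure_measure_pmf_finite)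
  define T where "T = {s \<in> S. G s \<le> c}"
  have c0: "0 \<le> c" using B measure_nonneg[of "measure_pmf M"] by (meson order_trans)
  have "Max S \<in> T"
  proof -
    have le: "R x \<le> Max S" if "x \<in> set_pmf M" for x
      using Max_ge[OF finS] that unfolding S_def by auto
    have "{x. Max S < R x} \<inter> set_pmf M = {}"
      using le by (meson Int_emptyI leD mem_Collect_eq)
    then have "G (Max S) = 0" unfolding Gset by simp
    then show ?thesis unfolding T_def using Max_in[OF finS neS] c0 by simp
  qed
  then have neT: "T \<noteq> {}" by auto
  have finT: "finite T" unfolding T_def using finS by simp
  define e0 where "e0 = Min T"
  have e0T: "e0 \<in> T" unfolding e0_def using Min_in[OF finT neT] .
  have minimal: "e0 \<le> y" if Gy: "G y \<le> c" for y
  proof (rule ccontr)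
    assume "\<not> e0 \<le> y"
    then have ylt: "y < e0" by simp
    define A where "A = {s \<in> S. s \<le> y}"
    show False
    proof (cases "A = {}")
      case True
      then have "{x. y < R x} \<inter> set_pmf M = set_pmf M"
        unfolding A_def S_def by (auto simp: not_le)
      then have "G y = 1" unfolding Gset using one by simp
      then show False using Gy c1 by simp
    next
      case False
      have finA: "finite A" unfolding A_def using finS by simp
      define s where "s = Max A"
      have sA: "s \<in> A" unfolding s_def using Max_in[OF finA False] .
      have "{x. y < R x} \<inter> set_pmf M = {x. s < R x} \<inter> set_pmf M"
      proof (intro set_eqI iffI)
        fix x assume "x \<in> {x. y < R x} \<inter> set_pmf M"
        then show "x \<in> {x. s < R x} \<inter> set_pmf M" using sA unfolding A_def by auto
      next
        fix x assume x: "x \<in> {x. s < R x} \<inter> set_pmf M"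
        show "x \<in> {x. y < R x} \<inter> set_pmf M"
        proof (rule ccontr)
          assume "x \<notin> {x. y < R x} \<inter> set_pmf M"
          then have "R x \<in> A" using x unfolding A_def S_def by auto
          then have "R x \<le> s" unfolding s_def using finA by simp
          then show False using x by simp
        qed
      qed
      then have "G s = G y" unfolding Gset by simp
      then have "s \<in> T" using sA Gy unfolding T_def A_def by simp
      then have "e0 \<le> s" unfolding e0_def using finT by simp
      then show False using sA ylt unfolding A_def by simp
    qed
  qed
  have "(LEAST \<eta>::real. G \<eta> \<le> c) \<le> B"
  proof (rule LeastI2_order)
    show "G e0 \<le> c" using e0T unfolding T_def by simp
    show "\<And>y. G y \<le> c \<Longrightarrow> e0 \<le> y" using minimal .
    show "\<And>x. G x \<le> c \<Longrightarrow> \<forall>y. G y \<le> c \<longrightarrow> x \<le> y \<Longrightarrow> x \<le> B"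
      using B unfolding G_def by blast
  qed
  then show ?thesis by (simp add: G_def)
qed

lemma pmf_joint: "pmf (joint q Pk) (u, v) = pmf q u * pmf (Pk u) v"
proof -
  have "pmf (joint q Pk) (u, v) = (\<integral>u'. pmf (map_pmf (Pair u') (Pk u')) (u, v) \<partial>measure_pmf q)"
    unfolding joint_def pmf_bind by simp
  also have "\<dots> = (\<Sum>a\<in>{u}. pmf (map_pmf (Pair a) (Pk a)) (u, v) * pmf q a)"
  proof (rule integral_measure_pmf_real)
    fix a assume "a \<in> set_pmf q" "pmf (map_pmf (Pair a) (Pk a)) (u, v) \<noteq> 0"
    then have "(u, v) \<in> set_pmf (map_pmf (Pair a) (Pk a))" by (metis set_pmf_iff)
    then show "a \<in> {u}" by auto
  qed simp
  also have "\<dots> = pmf (Pk u) v * pmf q u"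
  proof -
    have "pmf (map_pmf (Pair u) (Pk u)) (Pair u v) = pmf (Pk u) v"
      by (rule pmf_map_inj') (simp add: inj_def)
    then show ?thesis by simp
  qed
  finally show ?thesis by simp
qed

lemma exp_recip_ge:
  fixes r :: real assumes r: "0 < r"
  shows "2 - 1/r \<le> exp (r - 1)"
proof -
  have "r \<le> exp (r - 1)" using exp_ge_add_one_self[of "r - 1"] by simp
  moreover have "2 - 1/r \<le> r"
  proof -
    have "0 \<le> (r - 1)^2 / r" using r by simp
    also have "(r - 1)^2 / r = r - 2 + 1/r" using r by (simp add: field_simps power2_eq_square)
    finally show ?thesis by simp
  qed
  ultimately show ?thesis by simp
qed

lemma g_mono:
  fixes s t :: real assumes s: "1 \<le> s" and st: "s \<le> t"
  shows "exp (s - 1) + 1/s \<le> exp (t - 1) + 1/t"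
proof -
  have e1: "1 \<le> exp (s - 1)" using s by simp
  have "exp (t - 1) = exp (s - 1) * exp (t - s)" by (simp add: exp_add[symmetric])
  also have "\<dots> \<ge> exp (s - 1) * (1 + (t - s))"
    using exp_ge_add_one_self[of "t - s"] by (intro mult_left_mono) auto
  finally have "exp (t - 1) \<ge> exp (s - 1) + exp (s - 1) * (t - s)" by (simp add: algebra_simps)
  moreover have "exp (s - 1) * (t - s) \<ge> 1 * (t - s)" using e1 st by (intro mult_right_mono) auto
  moreover have "1/s - 1/t \<le> t - s"
  proof -
    have "1/s - 1/t = (t - s) / (s * t)" using s st by (simp add: field_simps)
    also have "\<dots> \<le> (t - s) / 1"
    proof (rule divide_left_mono)
      show "1 \<le> s * t" using s st by (metis mult_mono' mult.right_neutral order_trans zero_le_one)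
    qed (use s st in auto)
    finally show ?thesis by simp
  qed
  ultimately show ?thesis by simp
qed

lemma markov_sum:
  fixes w f :: "'a::finite \<Rightarrow> real" and A :: "'a set" and K :: real
  assumes w: "\<And>x. 0 \<le> w x" and wf: "\<And>x. 0 \<le> w x * f x"
    and fA: "\<And>x. x \<in> A \<Longrightarrow> K \<le> f x" and K: "0 < K"
  shows "sum w A \<le> (\<Sum>x\<in>UNIV. w x * f x) / K"
proof -
  have "sum w A * K = (\<Sum>x\<in>A. w x * K)" by (simp add: sum_distrib_right)
  also have "\<dots> \<le> (\<Sum>x\<in>A. w x * f x)"
    by (intro sum_mono mult_left_mono) (use w fA in auto)
  also have "\<dots> \<le> (\<Sum>x\<in>UNIV. w x * f x)"
    by (intro sum_mono2) (use wf in auto)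
  finally show ?thesis using K by (simp add: field_simps)
qed

theorem lemma2:
  fixes K :: nat and q :: "'u::finite pmf" and P :: "nat \<Rightarrow> 'u \<Rightarrow> 'v::finite pmf"
    and i j :: nat and \<epsilon> :: real
  assumes abs_cont: "\<And>k l u. k < K \<Longrightarrow> l < K \<Longrightarrow> u \<in> set_pmf q \<Longrightarrow>
      set_pmf (P k u) = set_pmf (P l u)"
    and i: "i < K" and j: "j < K"
    and eps: "0 < \<epsilon>" "\<epsilon> < 2"
  shows "eta q P i j \<epsilon> \<le> ln (2 / \<epsilon>) + 1 + ln (1 + cond_fdiv f1 q P i j)
    \<and> (\<epsilon> \<le> 1 \<longrightarrow>
         eta q P i j \<epsilon> \<le> 2 * ln (2 / \<epsilon>) * (1 + ln (1 + cond_fdiv f1 q P i j)))"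
proof -
  define R where "R = (\<lambda>(u, v). pmf (P i u) v / pmf (P j u) v)"
  define pI where "pI = pmf (joint q (P i))"
  define pJ where "pJ = pmf (joint q (P j))"
  have pIuv: "pI (u, v) = pmf q u * pmf (P i u) v" for u v unfolding pI_def by (rule pmf_joint)
  have pJuv: "pJ (u, v) = pmf q u * pmf (P j u) v" for u v unfolding pJ_def by (rule pmf_joint)
  have Ruv: "R (u, v) = pmf (P i u) v / pmf (P j u) v" for u v unfolding R_def by simp
  have pI0: "0 \<le> pI x" for x unfolding pI_def by simp
  have pJ0: "0 \<le> pJ x" for x unfolding pJ_def by simp
  have same: "pmf (P i u) v \<noteq> 0 \<longleftrightarrow> pmf (P j u) v \<noteq> 0" if "pmf q u \<noteq> 0" for u v
  proof -
    have "u \<in> set_pmf q" using that by (simp add: set_pmf_iff)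
    then have "set_pmf (P i u) = set_pmf (P j u)" using abs_cont i j by blast
    then show ?thesis by (metis set_pmf_iff)
  qed
  have supp: "pI x = 0 \<longleftrightarrow> pJ x = 0" for x
  proof (cases x)
    case (Pair u v)
    show ?thesis unfolding Pair pIuv pJuv using same[of u v] by auto
  qed
  have F1: "pJ x * R x = pI x" for x
  proof (cases x)
    case (Pair u v)
    show ?thesis
    proof (cases "pJ x = 0")
      case True then show ?thesis using supp by simp
    next
      case False
      then have "pmf (P j u) v \<noteq> 0" unfolding Pair pJuv by simp
      then show ?thesis unfolding Pair pJuv pIuv Ruv by simp
    qed
  qed
  have F2: "pI x * (1 / R x) = pJ x" for x
  proof (cases x)
    case (Pair u v)
    show ?thesis
    proof (cases "pI x = 0")
      case True then show ?thesis using supp by simp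
    next
      case False
      then have "pmf (P i u) v \<noteq> 0" "pmf q u \<noteq> 0" unfolding Pair pIuv by simp_all
      then show ?thesis unfolding Pair pJuv pIuv Ruv by simp
    qed
  qed
  have F3: "0 < R x" if "pI x \<noteq> 0" for x
  proof (cases x)
    case (Pair u v)
    have "pmf (P i u) v \<noteq> 0" "pmf q u \<noteq> 0" using that unfolding Pair pIuv by simp_all
    moreover then have "pmf (P j u) v \<noteq> 0" using same by blast
    ultimately show ?thesis unfolding Pair Ruv
      by (metis divide_pos_pos pmf_nonneg order_le_less)
  qed
  have sI: "(\<Sum>x\<in>UNIV. pI x) = 1" unfolding pI_def by (rule sum_pmf_eq_1) auto
  have sJ: "(\<Sum>x\<in>UNIV. pJ x) = 1" unfolding pJ_def by (rule sum_pmf_eq_1) auto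
  define M where "M = (\<Sum>x\<in>UNIV. pI x * exp (R x - 1))"
  have D: "cond_fdiv f1 q P i j = M - 1"
  proof -
    have fe: "(\<lambda>(u, v). f1 (pmf (P i u) v / pmf (P j u) v)) = (\<lambda>x. f1 (R x))"
      by (auto simp: R_def)
    have "cond_fdiv f1 q P i j = (\<Sum>x\<in>UNIV. f1 (R x) * pJ x)"
      unfolding cond_fdiv_def fe pJ_def by (rule integral_measure_pmf_real) auto
    also have "\<dots> = (\<Sum>x\<in>UNIV. pI x * exp (R x - 1) - pJ x)"
    proof (rule sum.cong)
      fix x
      have "f1 (R x) * pJ x = (pJ x * R x) * exp (R x - 1) - pJ x"
        unfolding f1_def by (simp add: algebra_simps)
      then show "f1 (R x) * pJ x = pI x * exp (R x - 1) - pJ x" using F1 by simp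
    qed simp
    also have "\<dots> = M - 1" unfolding M_def using sJ by (simp add: sum_subtractf)
    finally show ?thesis .
  qed
  have M1: "1 \<le> M"
  proof -
    have "(\<Sum>x\<in>UNIV. 2 * pI x - pJ x) \<le> M"
      unfolding M_def
    proof (rule sum_mono)
      fix x
      show "2 * pI x - pJ x \<le> pI x * exp (R x - 1)"
      proof (cases "pI x = 0")
        case True
        moreover have "pJ x = 0" using True supp by blast
        ultimately show ?thesis by simp
      next
        case False
        have "pI x * (2 - 1 / R x) \<le> pI x * exp (R x - 1)"
          using exp_recip_ge[OF F3[OF False]] pI0 by (intro mult_left_mono) auto
        moreover have "pI x * (2 - 1 / R x) = 2 * pI x - pJ x"
          using F2[of x] by (simp add: algebra_simps)
        ultimately show ?thesis by simp
      qed
    qed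
    moreover have "(\<Sum>x\<in>UNIV. 2 * pI x - pJ x) = 1"
      using sI sJ by (simp add: sum_subtractf sum_distrib_left[symmetric])
    ultimately show ?thesis by simp
  qed
  define l where "l = ln M"
  have Ml: "M = exp l" unfolding l_def using M1 by simp
  have l0: "0 \<le> l" unfolding l_def using M1 by simp
  have onepD: "1 + cond_fdiv f1 q P i j = M" using D by simp
  define a where "a = ln (2 / \<epsilon>)"
  have ea: "exp (- a) = \<epsilon> / 2" unfolding a_def using eps by (simp add: exp_minus)
  have a0: "0 < a" unfolding a_def using eps by simp
  have prob_eq: "measure_pmf.prob (joint q (P i)) {x. \<eta> < R x} = sum pI {x. \<eta> < R x}" for \<eta>
    unfolding pI_def by (rule measure_measure_pmf_finite) simp
  have eta_eq: "eta q P i j \<epsilon> = (LEAST \<eta>::real. measure_pmf.prob (joint q (P i)) {x. \<eta> < R x} \<le> \<epsilon> / 2)"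
  proof -
    have "\<And>\<eta>. {(u, v). pmf (P i u) v / pmf (P j u) v > \<eta>} = {x. \<eta> < R x}"
      by (auto simp: R_def)
    then show ?thesis unfolding eta_def by simp
  qed
  have c1: "\<epsilon> / 2 < 1" using eps by simp
  have bound1: "eta q P i j \<epsilon> \<le> a + 1 + l"
  proof -
    define B where "B = a + 1 + l"
    have K0: "0 < exp (B - 1)" by simp
    have "sum pI {x. B < R x} \<le> (\<Sum>x\<in>UNIV. pI x * exp (R x - 1)) / exp (B - 1)"
      by (rule markov_sum) (use pI0 K0 in auto)
    also have "\<dots> = M / exp (B - 1)" unfolding M_def ..
    also have "\<dots> = exp (- a)" unfolding Ml B_def by (simp add: exp_diff exp_add exp_minus field_simps)
    finally have "sum pI {x. B < R x} \<le> \<epsilon> / 2" using ea by simp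
    then have "eta q P i j \<epsilon> \<le> B"
      unfolding eta_eq by (intro least_le c1) (simp add: prob_eq)
    then show ?thesis unfolding B_def .
  qed
  have bound2: "eta q P i j \<epsilon> \<le> 2 * a * (1 + l)" if e1: "\<epsilon> \<le> 1"
  proof -
    have "2 \<le> 2 / \<epsilon>" using eps e1 by (simp add: le_divide_eq)
    then have aln: "ln 2 \<le> a" unfolding a_def using ln_le_cancel_iff eps by (metis ln_mono zero_less_numeral)
    have ah: "a > 1/2" using aln ln2_gt by simp
    define B where "B = 2 * a * (1 + l)"
    have "2*a*1 \<le> 2*a*(1+l)" using ah l0 by (intro mult_left_mono) auto
    then have B1: "1 < B" unfolding B_def using ah by linarith
    define Kc where "Kc = exp (B - 1) + 1 / B - 2"
    have Kpos: "0 < Kc"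
    proof -
      have "B \<le> exp (B - 1)" using exp_ge_add_one_self[of "B - 1"] by simp
      moreover have "0 < (B - 1)^2 / B" using B1 by simp
      moreover have "(B - 1)^2 / B = B - 2 + 1/B" using B1 by (simp add: field_simps power2_eq_square)
      ultimately show ?thesis unfolding Kc_def by simp
    qed
    define phi where "phi = (\<lambda>x. exp (R x - 1) + 1 / R x - 2)"
    have wphi: "0 \<le> pI x * phi x" for x
    proof (cases "pI x = 0")
      case True then show ?thesis by simp
    next
      case False
      have "0 \<le> phi x" unfolding phi_def using exp_recip_ge[OF F3[OF False]] by simp
      then show ?thesis using pI0 by simp
    qed
    have phiA: "Kc \<le> phi x" if "x \<in> {x. B < R x}" for x
      using g_mono[of B "R x"] B1 that unfolding Kc_def phi_def by simp
    have "sum pI {x. B < R x} \<le> (\<Sum>x\<in>UNIV. pI x * phi x) / Kc"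
      by (rule markov_sum) (use pI0 wphi phiA Kpos in auto)
    also have "(\<Sum>x\<in>UNIV. pI x * phi x) = M - 1"
    proof -
      have "(\<Sum>x\<in>UNIV. pI x * phi x) = (\<Sum>x\<in>UNIV. pI x * exp (R x - 1) + pJ x - 2 * pI x)"
      proof (rule sum.cong)
        fix x show "pI x * phi x = pI x * exp (R x - 1) + pJ x - 2 * pI x"
          unfolding phi_def using F2[of x] by (simp add: algebra_simps)
      qed simp
      also have "\<dots> = M + 1 - 2" unfolding M_def using sI sJ
        by (simp add: sum.distrib sum_subtractf sum_distrib_left[symmetric])
      finally show ?thesis by simp
    qed
    also have "(M - 1) / Kc \<le> exp (- a)"
    proof -
      have "M - 1 \<le> exp (- a) * Kc" unfolding Ml Kc_def B_def using key_ineq[OF aln l0] by simp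
      then show ?thesis using Kpos by (simp add: divide_le_eq mult.commute)
    qed
    finally have "sum pI {x. B < R x} \<le> \<epsilon> / 2" using ea by simp
    then have "eta q P i j \<epsilon> \<le> B"
      unfolding eta_eq by (intro least_le c1) (simp add: prob_eq)
    then show ?thesis unfolding B_def .
  qed
  show ?thesis
    unfolding onepD using bound1 bound2 unfolding a_def l_def by simp
qed

end
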